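(* Let $f:\mathbb{N}\to\mathbb{R}$ with $f(1)=1$. Assume there exist an integer $N\geq2$, $C>0$ and $\gamma\in\mathbb{R}$ such that $f(n)=0$ for all $n\geq N+1$ and $|f(n)|\leq Cn^\gamma$ for all $n\leq N$. Then $$|f^{-1}(n)|\leq n^{\gamma+\varsigma}, \quad n\geq2,$$ where $\varsigma>0$ is the unique root of $\sum_{m=2}^{N} m^{-s} = \frac{1}{C}$.
   Context: $f^{-1}$ denotes the Dirichlet inverse of $f$: the arithmetic function with $\sum_{d\mid n} f(n/d) f^{-1}(d)=\varepsilon(n)$ for all $n$, where $\varepsilon(1)=1$ and $\varepsilon(n)=0$ for $n\ge2$. *)

theory Defs
  imports Complex_Main
begin

text \<open>Arithmetic functions are modelled as functions nat => real; only values at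
positive integers matter.\<close>

definition dirichlet_inverse :: "(nat \<Rightarrow> real) \<Rightarrow> nat \<Rightarrow> real" where
  "dirichlet_inverse f = (SOME g. \<forall>n\<ge>1.
      (\<Sum>d | d dvd n. f (n div d) * g d) = (if n = 1 then 1 else 0))"

end

theory Submission
  imports Defs
begin

function dinv :: "(nat \<Rightarrow> real) \<Rightarrow> nat \<Rightarrow> real" where
  "dinv f n = (if n \<le> 1 then 1 else
     - (\<Sum>d\<in>{d. d dvd n \<and> d < n}. f (n div d) * dinv f d))"
  by auto
termination
  by (relation "measure snd") auto

declare dinv.simps[simp del]

lemma divset_split:
  assumes "(n::nat) \<ge> 1"
  shows "{d. d dvd n} = insert n {d. d dvd n \<and> d < n}"
proof -
  have "x < n" if "x dvd n" "x \<noteq> n" for x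
    using dvd_imp_le[OF that(1)] assms that(2) by linarith
  then show ?thesis by auto
qed

lemma fin_div: "n \<ge> 1 \<Longrightarrow> finite {d. d dvd (n::nat) \<and> P d}"
  by (rule finite_subset[of _ "{..n}"]) (auto dest: dvd_imp_le)

lemma dinv_prop:
  assumes f1: "f 1 = 1"
  shows "\<forall>n\<ge>1. (\<Sum>d | d dvd n. f (n div d) * dinv f d) = (if n = 1 then 1 else 0)"
proof (intro allI impI)
  fix n :: nat assume n: "n \<ge> 1"
  have "(\<Sum>d | d dvd n. f (n div d) * dinv f d)
      = f 1 * dinv f n + (\<Sum>d\<in>{d. d dvd n \<and> d < n}. f (n div d) * dinv f d)"
    using n by (subst divset_split[OF n], subst sum.insert) (auto intro: fin_div)
  also have "\<dots> = (if n = 1 then 1 else 0)"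
  proof (cases "n = 1")
    case True
    then have "{d. d dvd n \<and> d < n} = {}" by auto
    then show ?thesis using True f1 by (simp add: dinv.simps)
  next
    case False
    then show ?thesis using f1 n by (subst dinv.simps) simp
  qed
  finally show "(\<Sum>d | d dvd n. f (n div d) * dinv f d) = (if n = 1 then 1 else 0)" .
qed

theorem proposition3p16:
  fixes f :: "nat \<Rightarrow> real" and N :: nat and C \<gamma> \<sigma> :: real
  assumes f1: "f 1 = 1"
    and N2: "N \<ge> 2"
    and Cpos: "C > 0"
    and vanish: "\<And>n. n \<ge> N + 1 \<Longrightarrow> f n = 0"
    and bound: "\<And>n. 1 \<le> n \<Longrightarrow> n \<le> N \<Longrightarrow> \<bar>f n\<bar> \<le> C * real n powr \<gamma>"
    and root: "(\<Sum>m = 2..N. real m powr (- \<sigma>)) = 1 / C"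
  shows "\<forall>n\<ge>2. \<bar>dirichlet_inverse f n\<bar> \<le> real n powr (\<gamma> + \<sigma>)"
proof -
  define g where "g = dirichlet_inverse f"
  have P: "\<forall>n\<ge>1. (\<Sum>d | d dvd n. f (n div d) * g d) = (if n = 1 then 1 else 0)"
  proof -
    have ex: "\<exists>g. \<forall>n\<ge>1. (\<Sum>d | d dvd n. f (n div d) * g d) = (if n = 1 then 1 else 0)"
      by (rule exI[of _ "dinv f"]) (rule dinv_prop[of f, OF f1])
    show ?thesis unfolding g_def dirichlet_inverse_def by (rule someI_ex[OF ex])
  qed
  have g1: "g 1 = 1"
  proof -
    have "{d. d dvd (1::nat)} = {1}" by auto
    then show ?thesis using P[rule_format, of 1] f1 by simp
  qed
  have grec: "g n = - (\<Sum>d\<in>{d. d dvd n \<and> d < n}. f (n div d) * g d)" if n: "n \<ge> 2" for n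
  proof -
    have "0 = (\<Sum>d | d dvd n. f (n div d) * g d)" using P[rule_format, of n] n by simp
    also have "\<dots> = f 1 * g n + (\<Sum>d\<in>{d. d dvd n \<and> d < n}. f (n div d) * g d)"
      using n by (subst divset_split) (auto intro: fin_div)
    finally show ?thesis using f1 by simp
  qed
  have main: "\<bar>g n\<bar> \<le> real n powr (\<gamma> + \<sigma>)" if "n \<ge> 1" for n
    using that
  proof (induction n rule: less_induct)
    case (less n)
    show ?case
    proof (cases "n = 1")
      case True then show ?thesis using g1 by simp
    next
      case False
      with less.prems have n2: "n \<ge> 2" by simp
      define D where "D = {d. d dvd n \<and> d < n}"
      define D' where "D' = {d. d dvd n \<and> d < n \<and> n div d \<le> N}"
      have finD: "finite D" unfolding D_def using n2 by (intro fin_div) simp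
      have finD': "finite D'" unfolding D'_def using n2 by (intro fin_div) simp
      have DD: "D' \<subseteq> D" unfolding D_def D'_def by auto
      have S: "(\<Sum>d\<in>D. f (n div d) * g d) = (\<Sum>d\<in>D'. f (n div d) * g d)"
        by (rule sum.mono_neutral_right[OF finD DD]) (auto simp: D_def D'_def intro!: vanish)
      have tb: "\<bar>f (n div d) * g d\<bar> \<le> C * real n powr (\<gamma> + \<sigma>) * real (n div d) powr (- \<sigma>)"
        if d: "d \<in> D'" for d
      proof -
        from d have dn: "d dvd n" "d < n" "n div d \<le> N" by (auto simp: D'_def)
        have dpos: "d \<ge> 1" using dn n2 by (cases "d = 0") auto
        define m where "m = n div d"
        have nm: "n = m * d" using dn by (simp add: m_def)
        have mpos: "m \<ge> 1" using nm n2 by (cases "m = 0") auto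
        have fb: "\<bar>f m\<bar> \<le> C * real m powr \<gamma>" using bound[of m] mpos dn by (simp add: m_def)
        have gb: "\<bar>g d\<bar> \<le> real d powr (\<gamma> + \<sigma>)" using less.IH[of d] dn dpos by simp
        have "\<bar>f m * g d\<bar> = \<bar>f m\<bar> * \<bar>g d\<bar>" by (simp add: abs_mult)
        also have "\<dots> \<le> (C * real m powr \<gamma>) * real d powr (\<gamma> + \<sigma>)"
          by (rule mult_mono[OF fb gb]) (use Cpos in auto)
        also have "\<dots> = C * real n powr (\<gamma> + \<sigma>) * real m powr (- \<sigma>)"
        proof -
          have "real n powr (\<gamma> + \<sigma>) = real m powr (\<gamma> + \<sigma>) * real d powr (\<gamma> + \<sigma>)"
            by (simp add: nm powr_mult)
          moreover have "real m powr (\<gamma> + \<sigma>) * real m powr (- \<sigma>) = real m powr \<gamma>"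
            by (simp add: powr_add[symmetric])
          ultimately show ?thesis by (simp add: algebra_simps)
        qed
        finally show ?thesis by (simp add: m_def)
      qed
      have inj: "inj_on (\<lambda>d. n div d) D'"
      proof (rule inj_onI)
        fix x y assume "x \<in> D'" "y \<in> D'" "n div x = n div y"
        then have x: "x dvd n" and y: "y dvd n" and e: "n div x = n div y" by (auto simp: D'_def)
        have "(n div x) * x = n" "(n div y) * y = n" using x y by simp_all
        then have "(n div x) * x = (n div x) * y" using e by simp
        moreover have "n div x \<noteq> 0" using \<open>(n div x) * x = n\<close> n2 by (metis mult_eq_0_iff not_numeral_le_zero le_0_eq)
        ultimately show "x = y" by simp
      qed
      have img: "(\<lambda>d. n div d) ` D' \<subseteq> {2..N}"
      proof
        fix m assume "m \<in> (\<lambda>d. n div d) ` D'"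
        then obtain d where d: "d dvd n" "d < n" "n div d \<le> N" and m: "m = n div d"
          by (auto simp: D'_def)
        have "d > 0" using d n2 by (cases "d = 0") auto
        have "n = m * d" using d m by simp
        moreover have "m \<noteq> 0" using \<open>n = m * d\<close> n2 by (metis mult_eq_0_iff not_numeral_le_zero le_0_eq)
        moreover have "m \<noteq> 1" using \<open>n = m * d\<close> d(2) by auto
        ultimately have "m \<ge> 2" by linarith
        then show "m \<in> {2..N}" using d m by simp
      qed
      have "\<bar>g n\<bar> = \<bar>\<Sum>d\<in>D'. f (n div d) * g d\<bar>" using grec[OF n2] S by (simp add: D_def)
      also have "\<dots> \<le> (\<Sum>d\<in>D'. \<bar>f (n div d) * g d\<bar>)" by (rule sum_abs)
      also have "\<dots> \<le> (\<Sum>d\<in>D'. C * real n powr (\<gamma> + \<sigma>) * real (n div d) powr (- \<sigma>))"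
        by (rule sum_mono) (rule tb)
      also have "\<dots> = C * real n powr (\<gamma> + \<sigma>) * (\<Sum>d\<in>D'. real (n div d) powr (- \<sigma>))"
        by (simp add: sum_distrib_left)
      also have "(\<Sum>d\<in>D'. real (n div d) powr (- \<sigma>)) = (\<Sum>m\<in>(\<lambda>d. n div d) ` D'. real m powr (- \<sigma>))"
        by (simp add: sum.reindex[OF inj])
      also have "\<dots> \<le> (\<Sum>m = 2..N. real m powr (- \<sigma>))"
        by (rule sum_mono2[OF _ img]) auto
      also have "C * real n powr (\<gamma> + \<sigma>) * (\<Sum>m = 2..N. real m powr (- \<sigma>)) = real n powr (\<gamma> + \<sigma>)"
        using root Cpos by simp
      finally show ?thesis using Cpos by (simp add: mult_left_mono)
    qed
  qed
  show ?thesis unfolding g_def[symmetric] using main by simp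
qed

end
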